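(* Let $G$ be a finite simple graph, $s\ge1$, $e_1,\dots,e_s$ edges of $G$ (repetitions allowed). Suppose $u=p_0,p_1,\dots,p_{2k+1}=v$ is an even-connection between $u$ and $v$ and $z=q_0,q_1,\dots,q_{2l+1}=w$ is an even-connection between $z$ and $w$, both with respect to $e_1\cdots e_s$. If for some $0\le i\le k-1$ and $0\le j\le l-1$ the edges $p_{2i+1}p_{2i+2}$ and $q_{2j+1}q_{2j+2}$ have a common vertex, then $u$ is even-connected to $z$ or to $w$ with respect to $e_1\cdots e_s$, and $v$ is even-connected to $z$ or to $w$ with respect to $e_1\cdots e_s$.
   Context: Edges are identified with monomials. An even-connection between $u$ and $v$ (possibly equal) with respect to $e_1,\dots,e_s$ is a sequence of vertices $p_0,\dots,p_{2k+1}$, $k\ge1$ (repeats allowed), with (1) $p_0=u$, $p_{2k+1}=v$; (2) for all $0\le l\le k-1$, $p_{2l+1}p_{2l+2}=e_i$ for some $i$; (3) for every $i$, $|\{l\ge0: p_{2l+1}p_{2l+2}=e_i\}|\le|\{j: e_j=e_i\}|$; (4) each $p_rp_{r+1}$, $0\le r\le 2k$, is an edge of $G$. $u,v$ are even-connected if such a sequence exists. *)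

theory Defs
  imports Main
begin

text \<open>A finite simple graph on vertex set V: edges are 2-element subsets of V
  (an edge is identified with the squarefree monomial x_a x_b, i.e. the set {a,b}).\<close>
definition simple_graph :: "'a set \<Rightarrow> 'a set set \<Rightarrow> bool" where
  "simple_graph V E \<longleftrightarrow> finite V \<and> (\<forall>e\<in>E. e \<subseteq> V \<and> card e = 2)"

definition is_even_connection ::
  "'a set set \<Rightarrow> 'a set list \<Rightarrow> 'a \<Rightarrow> 'a \<Rightarrow> 'a list \<Rightarrow> bool" where
  "is_even_connection E es u v ps \<longleftrightarrow>
     (\<exists>k. k \<ge> 1 \<and> length ps = 2 * k + 2 \<and>
        ps ! 0 = u \<and> ps ! (2 * k + 1) = v \<and>
        (\<forall>l<k. {ps ! (2 * l + 1), ps ! (2 * l + 2)} \<in> set es) \<and>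
        (\<forall>e\<in>set es. card {l. l < k \<and> {ps ! (2 * l + 1), ps ! (2 * l + 2)} = e}
                        \<le> count_list es e) \<and>
        (\<forall>r<2 * k + 1. {ps ! r, ps ! (r + 1)} \<in> E))"

definition even_connected :: "'a set set \<Rightarrow> 'a set list \<Rightarrow> 'a \<Rightarrow> 'a \<Rightarrow> bool" where
  "even_connected E es u v \<longleftrightarrow> (\<exists>ps. is_even_connection E es u v ps)"

end

theory Submission
  imports Defs
begin

definition edg :: "'a \<times> 'a \<Rightarrow> 'a set" where "edg p = {fst p, snd p}"

fun flat :: "('a \<times> 'a) list \<Rightarrow> 'a list" where
  "flat [] = []"
| "flat ((a,b)#r) = a # b # flat r"

fun chain :: "'a set set \<Rightarrow> 'a list \<Rightarrow> bool" where
  "chain E (x#y#r) = ({x,y} \<in> E \<and> chain E (y#r))"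
| "chain E _ = True"

definition subc :: "'b list \<Rightarrow> 'b list \<Rightarrow> bool" where
  "subc xs ys \<longleftrightarrow> (\<forall>x. count_list xs x \<le> count_list ys x)"

definition rep :: "'a set set \<Rightarrow> 'a set list \<Rightarrow> 'a \<Rightarrow> 'a \<Rightarrow> ('a \<times> 'a) list \<Rightarrow> bool" where
  "rep E es u v P \<longleftrightarrow> P \<noteq> [] \<and> chain E (u # flat P @ [v]) \<and> subc (map edg P) es"

lemma flat_Cons': "flat (p # r) = fst p # snd p # flat r"
  by (cases p) simp

lemma flat_append[simp]: "flat (xs @ ys) = flat xs @ flat ys"
  by (induction xs rule: flat.induct) auto

lemma length_flat[simp]: "length (flat P) = 2 * length P"
  by (induction P rule: flat.induct) auto

lemma nth_flat: "m < length P \<Longrightarrow> flat P ! (2*m) = fst (P!m) \<and> flat P ! (2*m+1) = snd (P!m)"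
proof (induction P arbitrary: m rule: flat.induct)
  case 1 then show ?case by simp
next
  case (2 a b r)
  then show ?case by (cases m) auto
qed

lemma rev_flat: "rev (flat P) = flat (map prod.swap (rev P))"
  by (induction P rule: flat.induct) auto

lemma chain_nth: "chain E xs \<longleftrightarrow> (\<forall>r. Suc r < length xs \<longrightarrow> {xs!r, xs!Suc r} \<in> E)"
proof (induction E xs rule: chain.induct)
  case (1 E x y r)
  show ?case
  proof
    assume "chain E (x # y # r)"
    then show "\<forall>ra. Suc ra < length (x # y # r) \<longrightarrow> {(x # y # r) ! ra, (x # y # r) ! Suc ra} \<in> E"
      using 1 by (auto simp: nth_Cons split: nat.splits)
  next
    assume h: "\<forall>ra. Suc ra < length (x # y # r) \<longrightarrow> {(x # y # r) ! ra, (x # y # r) ! Suc ra} \<in> E"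
    have "{x,y} \<in> E" using h[rule_format, of 0] by simp
    moreover have "chain E (y#r)" using 1 h[rule_format, of "Suc _"] by auto
    ultimately show "chain E (x # y # r)" by simp
  qed
qed auto

lemma chain_split: "chain E (xs @ y # ys) \<longleftrightarrow> chain E (xs @ [y]) \<and> chain E (y # ys)"
proof (induction xs)
  case Nil then show ?case by (cases ys) auto
next
  case (Cons a xs) then show ?case by (cases xs) auto
qed

lemma chain_snoc: "chain E (xs @ [a, b]) \<longleftrightarrow> chain E (xs @ [a]) \<and> {a,b} \<in> E"
  using chain_split[of E xs a "[b]"] by simp

lemma chain_rev: "chain E (rev xs) = chain E xs"
proof (induction E xs rule: chain.induct)
  case (1 E x y r)
  have "chain E (rev (x#y#r)) = chain E (rev r @ [y, x])" by simp
  also have "... = (chain E (rev r @ [y]) \<and> {y,x} \<in> E)" by (rule chain_snoc)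
  also have "... = (chain E (y#r) \<and> {x,y} \<in> E)" using 1 by (simp add: insert_commute)
  finally show ?case by auto
qed auto

lemma edg_swap[simp]: "edg o prod.swap = edg"
  by (auto simp: edg_def fun_eq_iff)

lemma subc_trans: "subc xs ys \<Longrightarrow> subc ys zs \<Longrightarrow> subc xs zs"
  unfolding subc_def using le_trans by blast

lemma subc_take: "subc (take n xs) xs"
  unfolding subc_def
  by (metis append_take_drop_id count_list_append le_add1)

lemma subc_drop: "subc (drop n xs) xs"
  unfolding subc_def
  by (metis append_take_drop_id count_list_append le_add2)

lemma subc_rev: "subc (rev xs) ys = subc xs ys"
  unfolding subc_def by simp

lemma subc_join: "subc A C \<Longrightarrow> subc B C \<Longrightarrow> set A \<inter> set B = {} \<Longrightarrow> subc (A @ B) C"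
  unfolding subc_def
  by (metis add.right_neutral add_0 count_list_append count_notin disjoint_iff)

lemma rep_rev: "rep E es u v P \<Longrightarrow> rep E es v u (map prod.swap (rev P))"
proof -
  assume h: "rep E es u v P"
  have "rev (u # flat P @ [v]) = v # flat (map prod.swap (rev P)) @ [u]"
    by (simp add: rev_flat)
  then have "chain E (v # flat (map prod.swap (rev P)) @ [u])"
    using h chain_rev unfolding rep_def by metis
  moreover have "map edg (map prod.swap (rev P)) = rev (map edg P)"
    by (simp add: rev_map)
  ultimately show ?thesis using h unfolding rep_def by (simp add: subc_rev)
qed


lemma nth_ps: "l < length P \<Longrightarrow> (u # flat P @ [v]) ! (2*l+1) = fst (P!l) \<and> (u # flat P @ [v]) ! (2*l+2) = snd (P!l)"
proof -
  assume l: "l < length P"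
  have a: "(u # flat P @ [v]) ! (2*l+1) = flat P ! (2*l)" using l by (simp add: nth_append)
  have b: "(u # flat P @ [v]) ! (2*l+2) = flat P ! (2*l+1)"
    using l by (simp add: nth_append numeral_2_eq_2)
  show ?thesis using a b nth_flat[OF l] by simp
qed

lemma count_card: "count_list xs e = card {l. l < length xs \<and> xs ! l = e}"
  by (simp add: count_list_eq_length_filter length_filter_conv_card eq_commute)

lemma rep_imp_conn:
  assumes "rep E es u v P"
  shows "is_even_connection E es u v (u # flat P @ [v])"
proof -
  let ?ps = "u # flat P @ [v]"
  let ?k = "length P"
  have ne: "P \<noteq> []" and ch: "chain E ?ps" and sc: "subc (map edg P) es" using assms by (auto simp: rep_def)
  have e: "\<And>l. l < ?k \<Longrightarrow> {?ps ! (2*l+1), ?ps ! (2*l+2)} = edg (P!l)"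
  proof -
    fix l assume "l < ?k"
    from nth_ps[OF this, of u v] show "{?ps ! (2*l+1), ?ps ! (2*l+2)} = edg (P!l)"
      by (simp only: edg_def)
  qed
  have "\<forall>l<?k. {?ps ! (2 * l + 1), ?ps ! (2 * l + 2)} \<in> set es"
  proof (intro allI impI)
    fix l assume l: "l < ?k"
    have "edg (P!l) \<in> set (map edg P)" using l by simp
    then have "count_list (map edg P) (edg (P!l)) \<noteq> 0" by (simp add: count_list_0_iff)
    then have "count_list es (edg (P!l)) \<noteq> 0" using sc unfolding subc_def by (metis le_zero_eq)
    then show "{?ps ! (2 * l + 1), ?ps ! (2 * l + 2)} \<in> set es" using e[OF l] by (simp add: count_list_0_iff)
  qed
  moreover have "\<forall>e\<in>set es. card {l. l < ?k \<and> {?ps ! (2 * l + 1), ?ps ! (2 * l + 2)} = e} \<le> count_list es e"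
  proof
    fix x assume "x \<in> set es"
    have "{l. l < ?k \<and> {?ps ! (2 * l + 1), ?ps ! (2 * l + 2)} = x} = {l. l < length (map edg P) \<and> map edg P ! l = x}"
      by (intro Collect_cong) (metis e length_map nth_map)
    then show "card {l. l < ?k \<and> {?ps ! (2 * l + 1), ?ps ! (2 * l + 2)} = x} \<le> count_list es x"
      using sc unfolding subc_def by (metis count_card)
  qed
  moreover have "\<forall>r<2 * ?k + 1. {?ps ! r, ?ps ! (r + 1)} \<in> E"
    using ch unfolding chain_nth by simp
  moreover have "?k \<ge> 1" using ne by (cases P) auto
  moreover have "?ps ! (2 * ?k + 1) = v" by (simp add: nth_append)
  moreover have "length ?ps = 2 * ?k + 2" by simp
  moreover have "?ps ! 0 = u" by simp
  ultimately show ?thesis unfolding is_even_connection_def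
    apply (rule_tac x="?k" in exI)
    apply (intro conjI)
    apply assumption+
    done
qed

lemma flat_pairs: "length xs = 2*k \<Longrightarrow> flat (map (\<lambda>m. (xs!(2*m), xs!(2*m+1))) [0..<k]) = xs"
proof (induction k arbitrary: xs)
  case 0 then show ?case by simp
next
  case (Suc k)
  from Suc.prems have "length xs = Suc (Suc (2*k))" by simp
  then obtain a b rest where xs: "xs = a # b # rest" and lr: "length rest = 2*k"
    by (auto simp: length_Suc_conv)
  have "map (\<lambda>m. (xs!(2*m), xs!(2*m+1))) [0..<Suc k] = (a,b) # map (\<lambda>m. (rest!(2*m), rest!(2*m+1))) [0..<k]"
    by (simp add: xs upt_conv_Cons map_Suc_upt[symmetric] del: upt_Suc)
  then show ?case using Suc.IH[OF lr] xs by simp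
qed

lemma conn_imp_rep:
  assumes "is_even_connection E es u v ps"
  shows "\<exists>P. rep E es u v P \<and> ps = u # flat P @ [v]"
proof -
  obtain k where k1: "k \<ge> 1" and len: "length ps = 2 * k + 2" and p0: "ps ! 0 = u"
    and pe: "ps ! (2 * k + 1) = v"
    and ein: "\<forall>l<k. {ps ! (2 * l + 1), ps ! (2 * l + 2)} \<in> set es"
    and cnt: "\<forall>e\<in>set es. card {l. l < k \<and> {ps ! (2 * l + 1), ps ! (2 * l + 2)} = e} \<le> count_list es e"
    and ch: "\<forall>r<2 * k + 1. {ps ! r, ps ! (r + 1)} \<in> E"
    using assms unfolding is_even_connection_def by (elim exE conjE) (rule that, assumption+)
  define mid where "mid = take (2*k) (drop 1 ps)"
  have lm: "length mid = 2*k" using len by (simp add: mid_def)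
  define P where "P = map (\<lambda>m. (mid!(2*m), mid!(2*m+1))) [0..<k]"
  have fP: "flat P = mid" using flat_pairs[OF lm] by (simp add: P_def)
  have lP: "length P = k" by (simp add: P_def)
  have ps: "ps = u # flat P @ [v]"
  proof (rule nth_equalityI)
    show "length ps = length (u # flat P @ [v])" using len lP by simp
    fix r assume r: "r < length ps"
    show "ps ! r = (u # flat P @ [v]) ! r"
    proof (cases r)
      case 0 then show ?thesis using p0 by simp
    next
      case (Suc r')
      show ?thesis
      proof (cases "r' < 2*k")
        case True
        then show ?thesis using Suc len by (simp add: fP nth_append mid_def)
      next
        case False
        then have "r = 2*k+1" using Suc r len by simp
        then show ?thesis using pe lP by (simp add: nth_append)
      qed
    qed
  qed
  have e: "\<And>l. l < k \<Longrightarrow> {ps ! (2*l+1), ps ! (2*l+2)} = edg (P!l)"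
  proof -
    fix l assume "l < k"
    then have "l < length P" using lP by simp
    from nth_ps[OF this, of u v] show "{ps ! (2*l+1), ps ! (2*l+2)} = edg (P!l)"
      using ps by (simp only: edg_def)
  qed
  have "subc (map edg P) es"
    unfolding subc_def
  proof
    fix x
    show "count_list (map edg P) x \<le> count_list es x"
    proof (cases "x \<in> set es")
      case True
      have "{l. l < k \<and> {ps ! (2 * l + 1), ps ! (2 * l + 2)} = x} = {l. l < length (map edg P) \<and> map edg P ! l = x}"
      proof (rule Collect_cong)
        fix l show "(l < k \<and> {ps ! (2 * l + 1), ps ! (2 * l + 2)} = x) = (l < length (map edg P) \<and> map edg P ! l = x)"
        proof (cases "l < k")
          case True then show ?thesis using e[OF True] lP by simp
        next
          case False then show ?thesis using lP by simp
        qed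
      qed
      then show ?thesis using bspec[OF cnt True] count_card[of "map edg P" x] by simp
    next
      case False
      have "x \<notin> set (map edg P)"
      proof
        assume "x \<in> set (map edg P)"
        then obtain l where "l<k" "x = edg (P!l)" using lP by (auto simp: in_set_conv_nth)
        then have "{ps ! (2*l+1), ps ! (2*l+2)} \<in> set es" using ein by blast
        with e[OF \<open>l<k\<close>] \<open>x = edg (P!l)\<close> False show False by simp
      qed
      then show ?thesis by simp
    qed
  qed
  moreover have "chain E ps" unfolding chain_nth using ch len by simp
  moreover have "P \<noteq> []" using lP k1 by auto
  ultimately show ?thesis using ps unfolding rep_def by auto
qed


lemma decomp:
  assumes ch: "chain E (u # flat P @ [v])" and i: "i < length P"
  shows "chain E (u # flat (take i P) @ [fst (P!i)]) \<and> {fst (P!i), snd (P!i)} \<in> E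
         \<and> chain E (snd (P!i) # flat (drop (Suc i) P) @ [v])"
proof -
  have Pe: "P = take i P @ (fst (P!i), snd (P!i)) # drop (Suc i) P" using i by (simp add: id_take_nth_drop)
  have "flat P = flat (take i P) @ fst (P!i) # snd (P!i) # flat (drop (Suc i) P)"
    using arg_cong[OF Pe, of flat] by (simp add: flat_Cons')
  then have "chain E ((u # flat (take i P)) @ fst (P!i) # (snd (P!i) # flat (drop (Suc i) P) @ [v]))"
    using ch by simp
  then show ?thesis
    using chain_split[of E "u # flat (take i P)" "fst (P!i)" "snd (P!i) # flat (drop (Suc i) P) @ [v]"] by simp
qed

lemma assemble:
  "Qp \<noteq> [] \<Longrightarrow> chain E (u # flat (Pp @ Qp) @ [t]) \<Longrightarrow> subc (map edg Pp) es \<Longrightarrow>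
   subc (map edg Qp) es \<Longrightarrow> set (map edg Pp) \<inter> set (map edg Qp) = {} \<Longrightarrow> rep E es u t (Pp @ Qp)"
  unfolding rep_def using subc_join by fastforce

lemma sub_drop: "subc (map edg Q) es \<Longrightarrow> subc (map edg (drop j Q)) es"
  by (metis drop_map subc_drop subc_trans)

lemma sub_take: "subc (map edg Q) es \<Longrightarrow> subc (map edg (take j Q)) es"
  by (metis take_map subc_take subc_trans)

lemma map_edg_revswap: "map edg (map prod.swap (rev X)) = rev (map edg X)"
  by (simp add: rev_map)

lemma sub_revtake: "subc (map edg Q) es \<Longrightarrow> subc (map edg (map prod.swap (rev (take j Q)))) es"
  by (simp only: map_edg_revswap subc_rev sub_take)

lemma set_drop_e: "set (map edg (drop j Q)) \<subseteq> set (map edg Q)"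
  by (metis drop_map set_drop_subset)

lemma set_revtake_e: "set (map edg (map prod.swap (rev (take j Q)))) \<subseteq> set (map edg Q)"
  by (simp only: map_edg_revswap set_rev) (metis take_map set_take_subset)

lemma disj_take:
  "(\<And>m. m < n \<Longrightarrow> m < length P \<Longrightarrow> edg (P!m) \<notin> S) \<Longrightarrow> set (map edg (take n P)) \<inter> S = {}"
  by (auto simp: in_set_conv_nth) (metis)

lemma core:
  assumes rP: "rep E es u v P" and rQ: "rep E es z w Q"
    and i: "i < length P" and j: "j < length Q"
    and mt: "edg (P!i) \<inter> edg (Q!j) \<noteq> {}"
    and minimal: "\<forall>m<i. \<forall>j'<length Q. edg (P!m) \<inter> edg (Q!j') = {}"
  shows "\<exists>R. rep E es u z R \<or> rep E es u w R"
proof -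
  obtain a b where ab: "P!i = (a,b)" by (cases "P!i")
  have chP: "chain E (u # flat P @ [v])" and sP: "subc (map edg P) es" using rP by (auto simp: rep_def)
  have chQ: "chain E (z # flat Q @ [w])" and sQ: "subc (map edg Q) es" using rQ by (auto simp: rep_def)
  from decomp[OF chP i] ab have C1: "chain E (u # flat (take i P) @ [a])" and Eab: "{a,b} \<in> E" by auto
  have edge_ne: "\<And>p. edg p \<noteq> {}" by (simp add: edg_def)
  have disj1: "set (map edg (take i P)) \<inter> set (map edg Q) = {}"
  proof (rule disj_take)
    fix m assume m: "m < i" "m < length P"
    show "edg (P!m) \<notin> set (map edg Q)"
    proof
      assume "edg (P!m) \<in> set (map edg Q)"
      then obtain j' where "j' < length Q" "edg (P!m) = edg (Q!j')" by (auto simp: in_set_conv_nth)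
      then show False using minimal m edge_ne by (metis Int_absorb)
    qed
  qed
  have sPre: "subc (map edg (take i P)) es" using sub_take[OF sP] .
  show ?thesis
  proof (cases "\<exists>j'<length Q. a \<in> edg (Q!j')")
    case True
    then obtain j' where j': "j' < length Q" and aj: "a \<in> edg (Q!j')" by blast
    obtain c d where cd: "Q!j' = (c,d)" by (cases "Q!j'")
    have acd: "a = c \<or> a = d" using aj cd by (simp add: edg_def)
    from decomp[OF chQ j'] cd have D1: "chain E (z # flat (take j' Q) @ [c])" and Ecd: "{c,d} \<in> E"
      and D2: "chain E (d # flat (drop (Suc j') Q) @ [w])" by auto
    have dQ: "drop j' Q = (c,d) # drop (Suc j') Q" using j' cd by (metis Cons_nth_drop_Suc)
    have tQ: "take (Suc j') Q = take j' Q @ [(c,d)]" using j' cd by (metis take_Suc_conv_app_nth)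
    show ?thesis
    proof (cases "a = c")
      case True
      let ?R = "take i P @ drop j' Q"
      have "chain E (u # flat ?R @ [w])"
        using chain_split[of E "u # flat (take i P)" c "d # flat (drop (Suc j') Q) @ [w]"] C1 True Ecd D2
        by (simp add: dQ)
      moreover have "set (map edg (take i P)) \<inter> set (map edg (drop j' Q)) = {}"
        using disj1 set_drop_e by blast
      ultimately have "rep E es u w ?R" using assemble sPre sub_drop[OF sQ] dQ by (metis list.distinct(1))
      then show ?thesis by blast
    next
      case False
      then have ad: "a = d" using acd by simp
      let ?Qp = "map prod.swap (rev (take (Suc j') Q))"
      let ?R = "take i P @ ?Qp"
      have fq: "flat ?Qp = d # c # rev (flat (take j' Q))"
        by (simp add: tQ rev_flat[symmetric])
      have "chain E (rev (z # flat (take j' Q) @ [c]))" using D1 chain_rev by metis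
      then have r: "chain E (c # rev (flat (take j' Q)) @ [z])" by simp
      have "chain E (u # flat ?R @ [z])"
        using chain_split[of E "u # flat (take i P)" d "c # rev (flat (take j' Q)) @ [z]"] C1 ad Ecd r
        by (simp add: fq insert_commute)
      moreover have "set (map edg (take i P)) \<inter> set (map edg ?Qp) = {}"
        using disj1 set_revtake_e by blast
      moreover have "?Qp \<noteq> []" using j' by auto
      ultimately have "rep E es u z ?R" using assemble sPre sub_revtake[OF sQ] by metis
      then show ?thesis by blast
    qed
  next
    case False
    obtain c d where cd: "Q!j = (c,d)" by (cases "Q!j")
    have anot: "a \<notin> edg (Q!j)" using False j by blast
    then have bcd: "b = c \<or> b = d" using mt ab cd by (auto simp: edg_def)
    from decomp[OF chQ j] cd have D1: "chain E (z # flat (take j Q) @ [c])" and Ecd: "{c,d} \<in> E"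
      and D2: "chain E (d # flat (drop (Suc j) Q) @ [w])" by auto
    have dQ: "drop j Q = (c,d) # drop (Suc j) Q" using j cd by (metis Cons_nth_drop_Suc)
    have tQ: "take (Suc j) Q = take j Q @ [(c,d)]" using j cd by (metis take_Suc_conv_app_nth)
    have tP: "take (Suc i) P = take i P @ [(a,b)]" using i ab by (metis take_Suc_conv_app_nth)
    have disj2: "set (map edg (take (Suc i) P)) \<inter> set (map edg Q) = {}"
    proof -
      have "edg (a,b) \<notin> set (map edg Q)"
      proof
        assume "edg (a,b) \<in> set (map edg Q)"
        then obtain j' where "j' < length Q" "edg (a,b) = edg (Q!j')" by (auto simp: in_set_conv_nth)
        then show False using False by (auto simp: edg_def)
      qed
      then show ?thesis using disj1 tP by auto
    qed
    have sPre2: "subc (map edg (take (Suc i) P)) es" using sub_take[OF sP] .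
    show ?thesis
    proof (cases "b = c")
      case True
      let ?Qp = "map prod.swap (rev (take (Suc j) Q))"
      let ?R = "take (Suc i) P @ ?Qp"
      have fq: "flat ?Qp = d # c # rev (flat (take j Q))"
        by (simp add: tQ rev_flat[symmetric])
      have "chain E (rev (z # flat (take j Q) @ [c]))" using D1 chain_rev by metis
      then have r: "chain E (c # rev (flat (take j Q)) @ [z])" by simp
      have "chain E (u # flat ?R @ [z])"
        using chain_split[of E "u # flat (take i P)" a "b # d # c # rev (flat (take j Q)) @ [z]"] C1 True Ecd r Eab
        by (simp add: fq tP insert_commute)
      moreover have "set (map edg (take (Suc i) P)) \<inter> set (map edg ?Qp) = {}"
        using disj2 set_revtake_e by blast
      moreover have "?Qp \<noteq> []" using j by auto
      ultimately have "rep E es u z ?R" using assemble sPre2 sub_revtake[OF sQ] by metis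
      then show ?thesis by blast
    next
      case False
      then have bd: "b = d" using bcd by simp
      let ?R = "take (Suc i) P @ drop j Q"
      have "chain E (u # flat ?R @ [w])"
        using chain_split[of E "u # flat (take i P)" a "b # c # d # flat (drop (Suc j) Q) @ [w]"] C1 bd Ecd D2 Eab
        by (simp add: dQ tP insert_commute)
      moreover have "set (map edg (take (Suc i) P)) \<inter> set (map edg (drop j Q)) = {}"
        using disj2 set_drop_e by blast
      ultimately have "rep E es u w ?R" using assemble sPre2 sub_drop[OF sQ] dQ by (metis list.distinct(1))
      then show ?thesis by blast
    qed
  qed
qed


lemma main_u:
  assumes rP: "rep E es u v P" and rQ: "rep E es z w Q"
    and i: "i < length P" and j: "j < length Q"
    and mt: "edg (P!i) \<inter> edg (Q!j) \<noteq> {}"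
  shows "even_connected E es u z \<or> even_connected E es u w"
proof -
  let ?Pr = "\<lambda>n. n < length P \<and> (\<exists>j<length Q. edg (P!n) \<inter> edg (Q!j) \<noteq> {})"
  have "\<exists>n. ?Pr n" using i j mt by blast
  define n where "n = (LEAST n. ?Pr n)"
  have n: "?Pr n" unfolding n_def by (rule LeastI_ex) fact
  have mn: "\<forall>m<n. \<not> ?Pr m" unfolding n_def using not_less_Least by blast
  from n obtain j' where n1: "n < length P" and j': "j' < length Q" and mt': "edg (P!n) \<inter> edg (Q!j') \<noteq> {}" by blast
  have "\<forall>m<n. \<forall>j'<length Q. edg (P!m) \<inter> edg (Q!j') = {}" using mn n1 by auto
  from core[OF rP rQ n1 j' mt' this] obtain R where "rep E es u z R \<or> rep E es u w R" by blast
  then show ?thesis unfolding even_connected_def by (meson rep_imp_conn)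
qed

theorem lemma6p13:
  fixes V :: "'a set" and E :: "'a set set" and es :: "'a set list"
    and ps qs :: "'a list" and u v z w :: 'a and k l i j :: nat
  assumes "simple_graph V E"
    and "length es \<ge> 1" and "set es \<subseteq> E"
    and "is_even_connection E es u v ps" and "length ps = 2 * k + 2"
    and "is_even_connection E es z w qs" and "length qs = 2 * l + 2"
    and "i \<le> k - 1" and "j \<le> l - 1"
    and "{ps ! (2 * i + 1), ps ! (2 * i + 2)} \<inter> {qs ! (2 * j + 1), qs ! (2 * j + 2)} \<noteq> {}"
  shows "(even_connected E es u z \<or> even_connected E es u w) \<and>
         (even_connected E es v z \<or> even_connected E es v w)"
proof -
  obtain P where rP: "rep E es u v P" and psP: "ps = u # flat P @ [v]"
    using conn_imp_rep[OF assms(4)] by blast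
  obtain Q where rQ: "rep E es z w Q" and qsQ: "qs = z # flat Q @ [w]"
    using conn_imp_rep[OF assms(6)] by blast
  have lP: "length P = k" using psP assms(5) by simp
  have lQ: "length Q = l" using qsQ assms(7) by simp
  have "P \<noteq> []" "Q \<noteq> []" using rP rQ by (auto simp: rep_def)
  then have k1: "k \<ge> 1" and l1: "l \<ge> 1" using lP lQ by (auto simp: Suc_le_eq)
  have i: "i < length P" using assms(8) k1 lP by linarith
  have j: "j < length Q" using assms(9) l1 lQ by linarith
  have "ps ! (2*i+1) = fst (P!i) \<and> ps ! (2*i+2) = snd (P!i)" using nth_ps[OF i, of u v] psP by simp
  moreover have "qs ! (2*j+1) = fst (Q!j) \<and> qs ! (2*j+2) = snd (Q!j)" using nth_ps[OF j, of z w] qsQ by simp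
  ultimately have mt: "edg (P!i) \<inter> edg (Q!j) \<noteq> {}" using assms(10) by (simp add: edg_def)
  have A: "even_connected E es u z \<or> even_connected E es u w" by (rule main_u[OF rP rQ i j mt])
  let ?P' = "map prod.swap (rev P)"
  let ?i' = "length P - Suc i"
  have i': "?i' < length ?P'" using i by simp
  have "?P' ! ?i' = prod.swap (P!i)" using i by (simp add: rev_nth)
  then have "edg (?P' ! ?i') = edg (P!i)" by (simp add: edg_def insert_commute)
  then have mt2: "edg (?P' ! ?i') \<inter> edg (Q!j) \<noteq> {}" using mt by simp
  have B: "even_connected E es v z \<or> even_connected E es v w" by (rule main_u[OF rep_rev[OF rP] rQ i' j mt2])
  show ?thesis using A B by blast
qed

end
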